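(* Let $n=2$, $m_1,m_2\ge 2$ and $m_*=\min\{m_1,m_2\}$. For any $k\in\{1,\dots,m_*\}$ and $t\in\{1,\dots,2(m_*-k+1)\}$, $$\Pr\left[\text{the clockwork best-response dynamic on } G_{2,\mathbf{m}} \text{ converges to a } 2k\text{-cycle at time } t\right]=\frac{1}{m_{s_{\texttt{c}}(t+2k-1)}}\prod_{i=1}^{t+2k-2}\left(1-\frac{1}{m_{s_{\texttt{c}}(i)}}\left\lfloor\frac{i}{2}\right\rfloor\right).$$
   Context: A random 2-player game $G_{2,\mathbf{m}}$: player $i\in\{1,2\}$ has actions $[m_i]=\{1,\dots,m_i\}$; $\mathcal{M}=[m_1]\times[m_2]$. Payoffs $U_i(\mathbf{a})$, $i\in\{1,2\}$, $\mathbf{a}\in\mathcal{M}$, are drawn independently from a fixed atomless distribution on $\mathbb{R}$; the best response $B_i(a_{-i})=\arg\max_{x\in[m_i]}U_i(x,a_{-i})$ is a.s. unique. The clockwork sequence is $s_{\texttt{c}}(t)=1+((t-1)\bmod 2)$ (player 1 at odd times, player 2 at even times). The clockwork best-response dynamic: $\mathbf{A}^0$ uniform on $\mathcal{M}$ independent of payoffs; for $t\ge 1$ with $i=s_{\texttt{c}}(t)$, $A^t_{-i}=A^{t-1}_{-i}$ and $A^t_i=B_i(A^{t-1}_{-i})$. The dynamic converges to a $2k$-cycle at time $t$ if $t=\inf\{\tau\ge 1:\mathbf{A}^\tau=\mathbf{A}^{\tau+2k}\text{ and }\mathbf{A}^\tau\ne\mathbf{A}^{\tau+2k'}\text{ for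 all }k'\in\{1,\dots,k-1\}\}$ (so from time $t$ on the $2k$ profiles $\mathbf{A}^t,\dots,\mathbf{A}^{t+2k-1}$ repeat forever); $k=1$ corresponds to convergence to a pure Nash equilibrium at time $t$. *)

theory Defs
  imports "HOL-Probability.Probability"
begin

definition sc :: "nat \<Rightarrow> nat" where
  "sc t = 1 + ((t - 1) mod 2)"

definition m_of :: "nat \<Rightarrow> nat \<Rightarrow> nat \<Rightarrow> nat" where
  "m_of m1 m2 i = (if i = 1 then m1 else m2)"

text \<open>Payoffs: U (i, (a1, a2)) is the payoff of player i at profile (a1, a2).
  Best response of player i to the opponent's action b (the unique maximiser,
  which exists almost surely).\<close>
definition br :: "(nat \<times> (nat \<times> nat) \<Rightarrow> real) \<Rightarrow> nat \<Rightarrow> nat \<Rightarrow> nat \<Rightarrow> nat \<Rightarrow> nat" where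
  "br U m1 m2 i b =
     (if i = 1
      then (THE x. x \<in> {1..m1} \<and> (\<forall>y\<in>{1..m1}. y \<noteq> x \<longrightarrow> U (1, (y, b)) < U (1, (x, b))))
      else (THE x. x \<in> {1..m2} \<and> (\<forall>y\<in>{1..m2}. y \<noteq> x \<longrightarrow> U (2, (b, y)) < U (2, (b, x)))))"

fun cw_dyn :: "(nat \<times> (nat \<times> nat) \<Rightarrow> real) \<Rightarrow> nat \<Rightarrow> nat \<Rightarrow> nat \<times> nat \<Rightarrow> nat \<Rightarrow> nat \<times> nat" where
  "cw_dyn U m1 m2 a0 0 = a0"
| "cw_dyn U m1 m2 a0 (Suc t) =
     (let a = cw_dyn U m1 m2 a0 t in
      if sc (Suc t) = 1 then (br U m1 m2 1 (snd a), snd a)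
      else (fst a, br U m1 m2 2 (fst a)))"

definition is_cycle_at :: "(nat \<Rightarrow> nat \<times> nat) \<Rightarrow> nat \<Rightarrow> nat \<Rightarrow> bool" where
  "is_cycle_at A k \<tau> \<longleftrightarrow> A \<tau> = A (\<tau> + 2 * k) \<and> (\<forall>k'\<in>{1..<k}. A \<tau> \<noteq> A (\<tau> + 2 * k'))"

definition converges_at :: "(nat \<Rightarrow> nat \<times> nat) \<Rightarrow> nat \<Rightarrow> nat \<Rightarrow> bool" where
  "converges_at A k t \<longleftrightarrow> 1 \<le> t \<and> is_cycle_at A k t \<and> (\<forall>\<tau>. 1 \<le> \<tau> \<and> \<tau> < t \<longrightarrow> \<not> is_cycle_at A k \<tau>)"

definition game_space :: "real measure \<Rightarrow> nat \<Rightarrow> nat \<Rightarrow> ((nat \<times> (nat \<times> nat) \<Rightarrow> real) \<times> (nat \<times> nat)) measure" where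
  "game_space D m1 m2 =
     (PiM ({1, 2} \<times> ({1..m1} \<times> {1..m2})) (\<lambda>_. D)) \<Otimes>\<^sub>M uniform_count_measure ({1..m1} \<times> {1..m2})"

end

theory Submission
  imports Defs
begin

definition Xs :: "nat \<Rightarrow> nat \<Rightarrow> (nat \<times> nat) set" where
  "Xs m1 m2 = ({0} \<times> {1..m2}) \<union> ({1} \<times> {1..m1})"
definition Tg :: "nat \<Rightarrow> nat \<Rightarrow> nat \<times> nat \<Rightarrow> (nat \<times> nat) set" where
  "Tg m1 m2 p = (if fst p = 0 then {1} \<times> {1..m1} else {0} \<times> {1..m2})"
definition Hs :: "nat \<Rightarrow> nat \<Rightarrow> (nat \<times> nat \<Rightarrow> nat \<times> nat) set" where
  "Hs m1 m2 = PiE (Xs m1 m2) (Tg m1 m2)"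
definition orb :: "(nat \<times> nat \<Rightarrow> nat \<times> nat) \<Rightarrow> nat \<Rightarrow> nat \<Rightarrow> nat \<times> nat" where
  "orb H b i = (H ^^ i) (0, b)"

lemma orb_0[simp]: "orb H b 0 = (0, b)" by (simp add: orb_def)
lemma orb_Suc[simp]: "orb H b (Suc i) = H (orb H b i)" by (simp add: orb_def)

lemma finite_Xs[simp]: "finite (Xs m1 m2)" by (simp add: Xs_def)
lemma finite_Tg[simp]: "finite (Tg m1 m2 p)" by (simp add: Tg_def)
lemma finite_Hs[simp]: "finite (Hs m1 m2)" by (simp add: Hs_def finite_PiE)

lemma card_Tg: "card (Tg m1 m2 p) = (if fst p = 0 then m1 else m2)"
  by (simp add: Tg_def card_cartesian_product)

lemma orb_in:
  assumes "H \<in> Hs m1 m2" "b \<in> {1..m2}"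
  shows "orb H b i \<in> Xs m1 m2 \<and> fst (orb H b i) = i mod 2"
proof (induction i)
  case 0 then show ?case using assms by (simp add: Xs_def)
next
  case (Suc i)
  then have "H (orb H b i) \<in> Tg m1 m2 (orb H b i)" using assms by (auto simp: Hs_def PiE_iff)
  with Suc show ?case by (auto simp: Tg_def Xs_def split: if_splits) presburger+
qed


lemma fiber_count:
  fixes R :: "((nat \<times> nat \<Rightarrow> nat \<times> nat) \<times> nat) set"
  assumes RH: "R \<subseteq> Hs m1 m2 \<times> B" and fB: "finite B"
    and pX: "\<And>x. x \<in> R \<Longrightarrow> p x \<in> Xs m1 m2"
    and cm: "\<And>x. x \<in> R \<Longrightarrow> card (Tg m1 m2 (p x)) = m"
    and sel: "\<And>x. x \<in> R \<Longrightarrow> Sel x \<subseteq> Tg m1 m2 (p x) \<and> card (Sel x) = s"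
    and inv: "\<And>H b y. (H, b) \<in> R \<Longrightarrow> y \<in> Tg m1 m2 (p (H, b)) \<Longrightarrow>
        (H(p (H, b) := y), b) \<in> R \<and> p (H(p (H, b) := y), b) = p (H, b) \<and> Sel (H(p (H, b) := y), b) = Sel (H, b)"
  shows "m * card {x \<in> R. fst x (p x) \<in> Sel x} = s * card R"
proof -
  define fib where "fib x = (\<lambda>y. ((fst x)(p x := y), snd x)) ` Tg m1 m2 (p x)" for x
  define R' where "R' = {x \<in> R. fst x (p x) \<in> Sel x}"
  have finR: "finite R" using RH fB by (meson finite_SigmaI finite_Hs finite_subset)
  have self: "x \<in> fib x" if "x \<in> R" for x
  proof -
    obtain H b where x: "x = (H, b)" by force
    have "H \<in> Hs m1 m2" using RH that x by auto
    then have "H (p x) \<in> Tg m1 m2 (p x)" using pX[OF that] by (auto simp: Hs_def PiE_iff)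
    then show ?thesis unfolding fib_def x by (auto intro!: image_eqI[where x="H (p (H,b))"])
  qed
  have sub: "fib x \<subseteq> R" if "x \<in> R" for x
    using inv that unfolding fib_def by (cases x) auto
  have same: "fib z = fib x" if "x \<in> R" "z \<in> fib x" for x z
  proof -
    obtain H b where x: "x = (H, b)" by force
    from that obtain y where y: "y \<in> Tg m1 m2 (p x)" "z = (H(p x := y), b)"
      unfolding fib_def x by auto
    have "p z = p x" using inv[of H b y] that y x by auto
    then show ?thesis unfolding fib_def using y x by auto
  qed
  have disj: "fib x = fib x' \<or> fib x \<inter> fib x' = {}" if "x \<in> R" "x' \<in> R" for x x'
  proof (cases "fib x \<inter> fib x' = {}")
    case False
    then obtain z where "z \<in> fib x" "z \<in> fib x'" by auto
    then show ?thesis using same that by metis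
  qed simp
  have injf: "inj_on (\<lambda>y. ((fst x)(p x := y), snd x)) A" for x A
    by (rule inj_onI) (metis fun_upd_same prod.inject)
  have cfib: "card (fib x) = m" if "x \<in> R" for x
    unfolding fib_def using cm[OF that] by (simp add: card_image[OF injf])
  have cfib': "card (fib x \<inter> R') = s" if "x \<in> R" for x
  proof -
    obtain H b where x: "x = (H, b)" by force
    have "fib x \<inter> R' = (\<lambda>y. ((fst x)(p x := y), snd x)) ` Sel x"
    proof (intro set_eqI iffI)
      fix z assume z: "z \<in> fib x \<inter> R'"
      then obtain y where y: "y \<in> Tg m1 m2 (p x)" "z = (H(p x := y), b)"
        unfolding fib_def x by auto
      have "p z = p x" "Sel z = Sel x" using inv[of H b y] that y x by auto
      with z y show "z \<in> (\<lambda>y. ((fst x)(p x := y), snd x)) ` Sel x"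
        unfolding R'_def x by auto
    next
      fix z assume "z \<in> (\<lambda>y. ((fst x)(p x := y), snd x)) ` Sel x"
      then obtain y where y: "y \<in> Sel x" "z = (H(p x := y), b)" unfolding x by auto
      have yT: "y \<in> Tg m1 m2 (p x)" using sel[OF that] y by auto
      have "p z = p x" "Sel z = Sel x" "z \<in> R" using inv[of H b y] that yT y x by auto
      then show "z \<in> fib x \<inter> R'" using y yT unfolding R'_def fib_def x by auto
    qed
    then show ?thesis using sel[OF that] by (simp add: card_image[OF injf])
  qed
  have UR: "\<Union> (fib ` R) = R" using self sub by blast
  have UR': "\<Union> ((\<lambda>c. c \<inter> R') ` (fib ` R)) = R'" using self sub unfolding R'_def by blast
  have finC: "finite (fib ` R)" using finR by simp
  have fin_fib: "finite c" if "c \<in> fib ` R" for c using that sub finR finite_subset by blast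
  have disj2: "\<forall>i\<in>fib ` R. \<forall>j\<in>fib ` R. i \<noteq> j \<longrightarrow> i \<inter> j = {}"
    using disj by blast
  have "card R = (\<Sum>c\<in>fib ` R. card c)"
    using card_UN_disjoint[of "fib ` R" "\<lambda>c. c"] finC fin_fib disj2 UR by fastforce
  also have "\<dots> = (\<Sum>c\<in>fib ` R. m)" using cfib by (intro sum.cong) auto
  finally have c1: "card R = m * card (fib ` R)" by simp
  have "card R' = (\<Sum>c\<in>fib ` R. card (c \<inter> R'))"
  proof -
    have "card (\<Union> ((\<lambda>c. c \<inter> R') ` (fib ` R))) = (\<Sum>c\<in>fib ` R. card (c \<inter> R'))"
      by (rule card_UN_disjoint) (use finC fin_fib disj2 in blast)+
    then show ?thesis using UR' by simp
  qed
  also have "\<dots> = (\<Sum>c\<in>fib ` R. s)" using cfib' by (intro sum.cong) auto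
  finally have c2: "card R' = s * card (fib ` R)" by simp
  show ?thesis using c1 c2 unfolding R'_def by simp
qed


definition Rn :: "nat \<Rightarrow> nat \<Rightarrow> nat \<Rightarrow> ((nat \<times> nat \<Rightarrow> nat \<times> nat) \<times> nat) set" where
  "Rn m1 m2 n = {(H, b) \<in> Hs m1 m2 \<times> {1..m2}. \<forall>i j. i < j \<and> j \<le> n \<longrightarrow> orb H b i \<noteq> orb H b j}"

lemma orb_upd:
  assumes "\<forall>j<n. orb H b j \<noteq> p" "i \<le> n"
  shows "orb (H(p := y)) b i = orb H b i"
  using assms(2)
proof (induction i)
  case (Suc i)
  then have "orb H b i \<noteq> p" using assms(1) by auto
  with Suc show ?case by simp
qed simp

lemma card_odd_le: "card {i. i \<le> n \<and> odd i} = Suc n div 2 \<and> card {i. i \<le> n \<and> even i} = n div 2 + 1"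
proof (induction n)
  case 0
  have "{i. i \<le> (0::nat) \<and> odd i} = {}" "{i. i \<le> (0::nat) \<and> even i} = {0}" using odd_pos by auto
  then show ?case by simp
next
  case (Suc n)
  have e: "{i. i \<le> Suc n \<and> P i} = (if P (Suc n) then insert (Suc n) {i. i \<le> n \<and> P i} else {i. i \<le> n \<and> P i})" for P
    by (auto simp: le_Suc_eq)
  have f: "finite {i. i \<le> n \<and> P i}" for P by simp
  show ?case using Suc unfolding e[of odd] e[of even] by (auto simp: f)
qed

lemma card_par: "card {i \<in> {0..n}. i mod 2 \<noteq> n mod 2} = Suc n div 2"
proof (cases "even n")
  case True
  then have "{i \<in> {0..n}. i mod 2 \<noteq> n mod 2} = {i. i \<le> n \<and> odd i}" by auto presburger+
  then show ?thesis using card_odd_le by simp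
next
  case False
  then have "{i \<in> {0..n}. i mod 2 \<noteq> n mod 2} = {i. i \<le> n \<and> even i}" by auto presburger+
  then show ?thesis using card_odd_le False by simp
qed

lemma Rn_Suc:
  "(if even n then m1 else m2) * card (Rn m1 m2 (Suc n))
     = ((if even n then m1 else m2) - Suc n div 2) * card (Rn m1 m2 n)
   \<and> (Rn m1 m2 n \<noteq> {} \<longrightarrow> Suc n div 2 \<le> (if even n then m1 else m2))"
proof -
  define p where "p x = orb (fst x) (snd x) n" for x :: "(nat \<times> nat \<Rightarrow> nat \<times> nat) \<times> nat"
  define Sel where "Sel x = Tg m1 m2 (p x) - (orb (fst x) (snd x)) ` {0..n}" for x :: "(nat \<times> nat \<Rightarrow> nat \<times> nat) \<times> nat"
  let ?m = "if even n then m1 else m2"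
  have oin: "orb H b i \<in> Xs m1 m2 \<and> fst (orb H b i) = i mod 2" if "(H, b) \<in> Rn m1 m2 n" for H b i
    using orb_in that by (auto simp: Rn_def)
  have selc: "Sel x \<subseteq> Tg m1 m2 (p x) \<and> card (Sel x) = ?m - Suc n div 2 \<and> Suc n div 2 \<le> ?m" if x: "x \<in> Rn m1 m2 n" for x
proof -
    obtain H b where xe: "x = (H, b)" by force
    have inj: "inj_on (orb H b) {0..n}"
      using x xe unfolding Rn_def inj_on_def by auto (metis linorder_neqE_nat)
    have "Tg m1 m2 (p x) \<inter> orb H b ` {0..n} = orb H b ` {i \<in> {0..n}. i mod 2 \<noteq> n mod 2}"
    proof (intro set_eqI iffI)
      fix z assume "z \<in> Tg m1 m2 (p x) \<inter> orb H b ` {0..n}"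
      then obtain i where "i \<in> {0..n}" "z = orb H b i" "orb H b i \<in> Tg m1 m2 (orb H b n)"
        by (auto simp: p_def xe)
      then show "z \<in> orb H b ` {i \<in> {0..n}. i mod 2 \<noteq> n mod 2}"
        using oin[OF x[unfolded xe], of i] oin[OF x[unfolded xe], of n]
        by (auto simp: Tg_def split: if_splits)
    next
      fix z assume "z \<in> orb H b ` {i \<in> {0..n}. i mod 2 \<noteq> n mod 2}"
      then obtain i where i: "i \<in> {0..n}" "z = orb H b i" "i mod 2 \<noteq> n mod 2" by auto
      have "orb H b i \<in> Tg m1 m2 (orb H b n)"
        using oin[OF x[unfolded xe], of i] oin[OF x[unfolded xe], of n] i(3)
        by (cases "orb H b i") (auto simp: Tg_def Xs_def)
      then show "z \<in> Tg m1 m2 (p x) \<inter> orb H b ` {0..n}" using i by (auto simp: p_def xe)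
    qed
    moreover have "card (Tg m1 m2 (p x) \<inter> orb H b ` {0..n}) \<le> card (Tg m1 m2 (p x))"
      by (rule card_mono) auto
    moreover have "card (orb H b ` {i \<in> {0..n}. i mod 2 \<noteq> n mod 2}) = Suc n div 2"
      using card_par[of n] by (subst card_image) (auto intro: inj_on_subset[OF inj])
    moreover have "card (Tg m1 m2 (p x)) = ?m" using oin x xe by (auto simp: p_def card_Tg)
    ultimately show ?thesis unfolding Sel_def xe
      by (simp add: card_Diff_subset_Int)
  qed

  have "?m * card {x \<in> Rn m1 m2 n. fst x (p x) \<in> Sel x} = (?m - Suc n div 2) * card (Rn m1 m2 n)"
  proof (rule fiber_count[where B="{1..m2}"])
    show "Rn m1 m2 n \<subseteq> Hs m1 m2 \<times> {1..m2}" by (auto simp: Rn_def)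
    show "p x \<in> Xs m1 m2" if "x \<in> Rn m1 m2 n" for x using oin that by (cases x) (auto simp: p_def)
    show "card (Tg m1 m2 (p x)) = ?m" if "x \<in> Rn m1 m2 n" for x
      using oin that by (cases x) (auto simp: p_def card_Tg)
    show "Sel x \<subseteq> Tg m1 m2 (p x) \<and> card (Sel x) = ?m - Suc n div 2" if x: "x \<in> Rn m1 m2 n" for x
      using selc[OF x] by blast
    show "(H(p (H, b) := y), b) \<in> Rn m1 m2 n \<and> p (H(p (H, b) := y), b) = p (H, b) \<and>
          Sel (H(p (H, b) := y), b) = Sel (H, b)" if R: "(H, b) \<in> Rn m1 m2 n" and y: "y \<in> Tg m1 m2 (p (H, b))" for H b y
    proof -
      have ne: "\<forall>j<n. orb H b j \<noteq> orb H b n" using R by (auto simp: Rn_def)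
      have eq: "orb (H(orb H b n := y)) b i = orb H b i" if "i \<le> n" for i
        using orb_upd[OF ne that] .
      have "H(orb H b n := y) \<in> Hs m1 m2" using R y oin[OF R, of n]
        by (auto simp: Rn_def Hs_def p_def PiE_iff extensional_def)
      then have "(H(p (H, b) := y), b) \<in> Rn m1 m2 n" using R eq by (auto simp: Rn_def p_def)
      moreover have "p (H(p (H, b) := y), b) = p (H, b)" using eq by (simp add: p_def)
      moreover have "Sel (H(p (H, b) := y), b) = Sel (H, b)"
      proof -
        have "orb (H(orb H b n := y)) b ` {0..n} = orb H b ` {0..n}"
          by (rule image_cong) (auto simp: eq)
        then show ?thesis unfolding Sel_def using eq by (simp add: p_def)
      qed
      ultimately show ?thesis by blast
    qed
  qed simp
  moreover have "{x \<in> Rn m1 m2 n. fst x (p x) \<in> Sel x} = Rn m1 m2 (Suc n)"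
  proof (intro set_eqI iffI)
    fix x assume "x \<in> {x \<in> Rn m1 m2 n. fst x (p x) \<in> Sel x}"
    then show "x \<in> Rn m1 m2 (Suc n)"
      unfolding Rn_def Sel_def p_def by (cases x) (auto simp: le_Suc_eq less_Suc_eq_le, metis atLeastAtMost_iff image_eqI le0)
  next
    fix x assume x: "x \<in> Rn m1 m2 (Suc n)"
    obtain H b where xe: "x = (H, b)" by force
    have R: "(H, b) \<in> Rn m1 m2 n" using x xe by (auto simp: Rn_def)
    have "H (orb H b n) \<in> Tg m1 m2 (orb H b n)"
      using R oin[OF R, of n] by (auto simp: Rn_def Hs_def PiE_iff)
    then show "x \<in> {x \<in> Rn m1 m2 n. fst x (p x) \<in> Sel x}"
      using x R unfolding xe Sel_def p_def Rn_def
      by auto (metis orb_Suc le_imp_less_Suc order_refl)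
  qed
  ultimately have "?m * card (Rn m1 m2 (Suc n)) = (?m - Suc n div 2) * card (Rn m1 m2 n)" by simp
  moreover have "Rn m1 m2 n \<noteq> {} \<Longrightarrow> Suc n div 2 \<le> ?m" using selc by blast
  ultimately show ?thesis by (cases "Rn m1 m2 n = {}") auto
qed


lemma m_of_sc_Suc: "m_of m1 m2 (sc (Suc n)) = (if even n then m1 else m2)"
  by (auto simp: m_of_def sc_def)

lemma Rn_0: "Rn m1 m2 0 = Hs m1 m2 \<times> {1..m2}"
  by (auto simp: Rn_def)

lemma card_Rn:
  assumes "m1 > 0" "m2 > 0"
  shows "real (card (Rn m1 m2 n)) = real (card (Hs m1 m2)) * real m2 *
           (\<Prod>i = 1..n. (1 - 1 / real (m_of m1 m2 (sc i)) * real (i div 2)))"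
proof (induction n)
  case 0
  then show ?case by (simp add: Rn_0 card_cartesian_product)
next
  case (Suc n)
  define m where "m = (if even n then m1 else m2)"
  have mpos: "m > 0" using assms by (auto simp: m_def)
  have R: "m * card (Rn m1 m2 (Suc n)) = (m - Suc n div 2) * card (Rn m1 m2 n)"
     and B: "Rn m1 m2 n \<noteq> {} \<longrightarrow> Suc n div 2 \<le> m"
    using Rn_Suc[of n m1 m2] unfolding m_def by auto
  have "real (card (Rn m1 m2 (Suc n))) = real (card (Rn m1 m2 n)) * (1 - 1 / real m * real (Suc n div 2))"
  proof (cases "Rn m1 m2 n = {}")
    case True
    have "Rn m1 m2 (Suc n) \<subseteq> Rn m1 m2 n" by (auto simp: Rn_def)
    then have "Rn m1 m2 (Suc n) = {}" using True by blast
    then show ?thesis using True by simp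
  next
    case False
    then have le: "Suc n div 2 \<le> m" using B by blast
    have "real m * real (card (Rn m1 m2 (Suc n))) = (real m - real (Suc n div 2)) * real (card (Rn m1 m2 n))"
      using arg_cong[OF R, of real] le by (simp add: of_nat_diff)
    then show ?thesis using mpos by (simp add: field_simps)
  qed
  also have "\<dots> = real (card (Hs m1 m2)) * real m2 *
           (\<Prod>i = 1..Suc n. (1 - 1 / real (m_of m1 m2 (sc i)) * real (i div 2)))"
  proof -
    have "(\<Prod>i = 1..Suc n. (1 - 1 / real (m_of m1 m2 (sc i)) * real (i div 2)))
        = (1 - 1 / real (m_of m1 m2 (sc (Suc n))) * real (Suc n div 2)) * (\<Prod>i = 1..n. (1 - 1 / real (m_of m1 m2 (sc i)) * real (i div 2)))"
      by (rule prod.nat_ivl_Suc') simp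
    moreover have "m_of m1 m2 (sc (Suc n)) = m" unfolding m_def by (rule m_of_sc_Suc)
    ultimately show ?thesis unfolding Suc.IH by (simp only:) (simp add: algebra_simps)
  qed
  finally show ?case .
qed

lemma shift_eq:
  assumes step: "\<And>i. w (Suc i) = F (w i)" and e: "w i = w j"
  shows "w (i + n) = w (j + n)"
  by (induction n) (use e step in auto)

lemma iter_eq:
  assumes step: "\<And>i. w (Suc i) = F (w i)" and e: "w a = w (a + d)"
  shows "w a = w (a + q * d)"
proof (induction q)
  case (Suc q)
  have "w (a + q * d) = w (a + d + q * d)" using shift_eq[where w=w and F=F, OF step e] by simp
  then show ?case using Suc by (simp add: algebra_simps)
qed simp

lemma char_cycle:
  fixes w :: "nat \<Rightarrow> 'a"
  assumes step: "\<And>i. w (Suc i) = F (w i)" and par: "\<And>i j. w i = w j \<Longrightarrow> i mod 2 = j mod 2"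
    and k: "k \<ge> 1"
  defines "P u \<equiv> w u = w (u + 2 * k) \<and> (\<forall>k'\<in>{1..<k}. w u \<noteq> w (u + 2 * k'))"
  shows "(P u0 \<and> (\<forall>u<u0. \<not> P u)) \<longleftrightarrow>
         ((\<forall>i j. i < j \<and> j < u0 + 2 * k \<longrightarrow> w i \<noteq> w j) \<and> w (u0 + 2 * k) = w u0)"
proof
  assume H: "P u0 \<and> (\<forall>u<u0. \<not> P u)"
  then have P0: "w u0 = w (u0 + 2 * k)" and P0': "\<And>k'. k' \<in> {1..<k} \<Longrightarrow> w u0 \<noteq> w (u0 + 2 * k')"
    and NP: "\<And>u. u < u0 \<Longrightarrow> \<not> P u" unfolding P_def by auto
  have per: "w (a + 2 * k) = w a" if "a \<ge> u0" for a
    using shift_eq[where w=w and F=F, OF step P0, of "a - u0"] that by (simp add: add.commute)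
  have "w i \<noteq> w j" if ij: "i < j" "j < u0 + 2 * k" for i j
  proof
    assume e: "w i = w j"
    define d where "d = j - i"
    have d1: "d \<ge> 1" and jd: "j = i + d" using ij by (auto simp: d_def)
    show False
    proof (cases "i < u0")
      case True
      have e': "w i = w (i + d)" using e jd by simp
      have x: "w i = w (i + u0 * d)" using iter_eq[where w=w and F=F, OF step e', of u0] by (simp add: mult.commute)
      have "w (i + 2 * k) = w (i + u0 * d + 2 * k)"
        using shift_eq[where w=w and F=F, OF step x, of "2 * k"] by simp
      also have "\<dots> = w (i + u0 * d)"
      proof (rule per)
        show "u0 \<le> i + u0 * d" using d1 by (metis le_add2 mult.commute mult_le_mono2 nat_mult_1_right order_trans)
      qed
      finally have a: "w i = w (i + 2 * k)" using x by simp
      have b: "w i \<noteq> w (i + 2 * k')" if "k' \<in> {1..<k}" for k'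
      proof
        assume "w i = w (i + 2 * k')"
        then have "w (i + (u0 - i)) = w (i + 2 * k' + (u0 - i))" by (rule shift_eq[where w=w and F=F, OF step])
        then have "w u0 = w (u0 + 2 * k')" using True by (simp add: add.commute)
        with P0' that show False by blast
      qed
      have "P i" unfolding P_def using a b by blast
      with NP True show False by blast
    next
      case False
      have "i mod 2 = j mod 2" using par e .
      then have "even d" unfolding d_def using ij by presburger
      then obtain k' where k': "d = 2 * k'" by blast
      have k'r: "k' \<in> {1..<k}" using k' d1 ij False by (auto simp: d_def)
      have "w (i + (u0 + 2 * k - i)) = w (j + (u0 + 2 * k - i))"
        by (rule shift_eq[where w=w and F=F, OF step e])
      then have "w (u0 + 2 * k) = w (u0 + 2 * k' + 2 * k)"
        using ij k' jd by (simp add: algebra_simps)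
      also have "\<dots> = w (u0 + 2 * k')" by (rule per) simp
      finally have "w u0 = w (u0 + 2 * k')" using P0 by simp
      with P0' k'r show False by blast
    qed
  qed
  then show "(\<forall>i j. i < j \<and> j < u0 + 2 * k \<longrightarrow> w i \<noteq> w j) \<and> w (u0 + 2 * k) = w u0"
    using P0 by auto
next
  assume H: "(\<forall>i j. i < j \<and> j < u0 + 2 * k \<longrightarrow> w i \<noteq> w j) \<and> w (u0 + 2 * k) = w u0"
  have "P u0" unfolding P_def
  proof (intro conjI ballI)
    show "w u0 = w (u0 + 2 * k)" using H by simp
    fix k' assume "k' \<in> {1..<k}"
    then show "w u0 \<noteq> w (u0 + 2 * k')" using H by auto
  qed
  moreover have "\<not> P u" if "u < u0" for u
    unfolding P_def using H that k by auto
  ultimately show "P u0 \<and> (\<forall>u<u0. \<not> P u)" by blast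
qed

lemma Rn_inv:
  assumes R: "(H, b) \<in> Rn m1 m2 n" and y: "y \<in> Tg m1 m2 (orb H b n)"
  shows "(H(orb H b n := y), b) \<in> Rn m1 m2 n \<and> (\<forall>i\<le>n. orb (H(orb H b n := y)) b i = orb H b i)"
proof -
  have oin: "orb H b i \<in> Xs m1 m2 \<and> fst (orb H b i) = i mod 2" for i
    using orb_in R by (auto simp: Rn_def)
  have ne: "\<forall>j<n. orb H b j \<noteq> orb H b n" using R by (auto simp: Rn_def)
  have eq: "orb (H(orb H b n := y)) b i = orb H b i" if "i \<le> n" for i
    using orb_upd[OF ne that] .
  have "H(orb H b n := y) \<in> Hs m1 m2" using R y oin[of n]
    by (auto simp: Rn_def Hs_def PiE_iff extensional_def)
  then show ?thesis using R eq by (auto simp: Rn_def)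
qed

definition Gd :: "nat \<Rightarrow> nat \<Rightarrow> nat \<Rightarrow> nat \<Rightarrow> ((nat \<times> nat \<Rightarrow> nat \<times> nat) \<times> nat) set" where
  "Gd m1 m2 k t = {(H, b) \<in> Rn m1 m2 (t + 2 * k - 2). orb H b (t + 2 * k - 1) = orb H b (t - 1)}"

lemma card_Gd:
  assumes "k \<ge> 1" "t \<ge> 1"
  shows "m_of m1 m2 (sc (t + 2 * k - 1)) * card (Gd m1 m2 k t) = card (Rn m1 m2 (t + 2 * k - 2))"
proof -
  define n where "n = t + 2 * k - 2"
  have n1: "Suc n = t + 2 * k - 1" using assms unfolding n_def by arith
  have tn: "t - 1 \<le> n" using assms unfolding n_def by arith
  have nn: "n = (t - 1) + 2 * (k - 1) + 1" using assms unfolding n_def by arith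
  have par: "(t - 1) mod 2 \<noteq> n mod 2" unfolding nn by (simp add: mod_Suc)
  define p where "p x = orb (fst x) (snd x) n" for x :: "(nat \<times> nat \<Rightarrow> nat \<times> nat) \<times> nat"
  define Sel where "Sel x = {orb (fst x) (snd x) (t - 1)}" for x :: "(nat \<times> nat \<Rightarrow> nat \<times> nat) \<times> nat"
  let ?m = "if even n then m1 else m2"
  have oin: "orb H b i \<in> Xs m1 m2 \<and> fst (orb H b i) = i mod 2" if "(H, b) \<in> Rn m1 m2 n" for H b i
    using orb_in that by (auto simp: Rn_def)
  have "?m * card {x \<in> Rn m1 m2 n. fst x (p x) \<in> Sel x} = 1 * card (Rn m1 m2 n)"
  proof (rule fiber_count[where B="{1..m2}"])
    show "Rn m1 m2 n \<subseteq> Hs m1 m2 \<times> {1..m2}" by (auto simp: Rn_def)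
    show "p x \<in> Xs m1 m2" if "x \<in> Rn m1 m2 n" for x using oin that by (cases x) (auto simp: p_def)
    show "card (Tg m1 m2 (p x)) = ?m" if "x \<in> Rn m1 m2 n" for x
      using oin that by (cases x) (auto simp: p_def card_Tg)
    show "Sel x \<subseteq> Tg m1 m2 (p x) \<and> card (Sel x) = 1" if x: "x \<in> Rn m1 m2 n" for x
    proof -
      obtain H b where xe: "x = (H, b)" by force
      have "orb H b (t - 1) \<in> Tg m1 m2 (orb H b n)"
        using oin[OF x[unfolded xe], of "t - 1"] oin[OF x[unfolded xe], of n] par
        by (cases "orb H b (t - 1)") (auto simp: Tg_def Xs_def)
      then show ?thesis by (simp add: Sel_def p_def xe)
    qed
    show "(H(p (H, b) := y), b) \<in> Rn m1 m2 n \<and> p (H(p (H, b) := y), b) = p (H, b) \<and>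
          Sel (H(p (H, b) := y), b) = Sel (H, b)" if R: "(H, b) \<in> Rn m1 m2 n" and y: "y \<in> Tg m1 m2 (p (H, b))" for H b y
      using Rn_inv[OF R y[unfolded p_def, simplified]] tn by (auto simp: p_def Sel_def)
  qed simp
  moreover have "{x \<in> Rn m1 m2 n. fst x (p x) \<in> Sel x} = Gd m1 m2 k t"
    unfolding Gd_def p_def Sel_def n_def[symmetric] n1[symmetric] by auto
  moreover have "?m = m_of m1 m2 (sc (t + 2 * k - 1))"
    using m_of_sc_Suc[of m1 m2 n] n1 by simp
  ultimately show ?thesis unfolding n_def by simp
qed

lemma cw_orb:
  assumes H: "H \<in> Hs m1 m2" and a0: "snd a0 \<in> {1..m2}"
    and br1: "\<And>b. b \<in> {1..m2} \<Longrightarrow> br U m1 m2 1 b = snd (H (0, b))"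
    and br2: "\<And>a. a \<in> {1..m1} \<Longrightarrow> br U m1 m2 2 a = snd (H (1, a))"
  shows "cw_dyn U m1 m2 a0 (Suc n) =
     (if odd (Suc n) then (snd (orb H (snd a0) (Suc n)), snd (orb H (snd a0) n))
      else (snd (orb H (snd a0) n), snd (orb H (snd a0) (Suc n))))"
proof (induction n)
  case 0
  have "sc (Suc 0) = 1" by (simp add: sc_def)
  then show ?case using br1[OF a0] by simp
next
  case (Suc n)
  let ?w = "orb H (snd a0)"
  have oin: "?w i \<in> Xs m1 m2 \<and> fst (?w i) = i mod 2" for i using orb_in[OF H a0] .
  show ?case
  proof (cases "even n")
    case True
    then have sc2: "sc (Suc (Suc n)) = 2" by (simp add: sc_def) presburger
    have "?w (Suc n) = (1, snd (?w (Suc n)))" "snd (?w (Suc n)) \<in> {1..m1}"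
      using oin[of "Suc n"] True by (auto simp: Xs_def)
    then have "br U m1 m2 2 (snd (?w (Suc n))) = snd (?w (Suc (Suc n)))"
      using br2 by (metis orb_Suc)
    then show ?thesis using Suc True sc2 by (simp add: Let_def)
  next
    case False
    then have sc1: "sc (Suc (Suc n)) = 1" by (simp add: sc_def)
    have "?w (Suc n) = (0, snd (?w (Suc n)))" "snd (?w (Suc n)) \<in> {1..m2}"
      using oin[of "Suc n"] False by (auto simp: Xs_def)
    then have "br U m1 m2 1 (snd (?w (Suc n))) = snd (?w (Suc (Suc n)))"
      using br1 by (metis orb_Suc)
    then show ?thesis using Suc False sc1 by (simp add: Let_def)
  qed
qed

lemma conv_iff:
  assumes H: "H \<in> Hs m1 m2" and a0: "snd a0 \<in> {1..m2}"
    and br1: "\<And>b. b \<in> {1..m2} \<Longrightarrow> br U m1 m2 1 b = snd (H (0, b))"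
    and br2: "\<And>a. a \<in> {1..m1} \<Longrightarrow> br U m1 m2 2 a = snd (H (1, a))"
    and k: "k \<ge> 1" and t: "t \<ge> 1"
  shows "converges_at (cw_dyn U m1 m2 a0) k t \<longleftrightarrow> (H, snd a0) \<in> Gd m1 m2 k t"
proof -
  define w where "w = orb H (snd a0)"
  define A where "A = cw_dyn U m1 m2 a0"
  define P where "P u \<longleftrightarrow> w u = w (u + 2 * k) \<and> (\<forall>k'\<in>{1..<k}. w u \<noteq> w (u + 2 * k'))" for u
  have oin: "w i \<in> Xs m1 m2 \<and> fst (w i) = i mod 2" for i unfolding w_def using orb_in[OF H a0] .
  have wS: "w (Suc i) = H (w i)" for i by (simp add: w_def)
  have AS: "A (Suc n) = (if odd (Suc n) then (snd (w (Suc n)), snd (w n)) else (snd (w n), snd (w (Suc n))))" for n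
    unfolding A_def w_def by (rule cw_orb[OF H a0 br1 br2])
  have Aeq: "A (Suc x) = A (Suc y) \<longleftrightarrow> w x = w y" if "x mod 2 = y mod 2" for x y
  proof -
    have f1: "fst (w x) = fst (w y)" "fst (w (Suc x)) = fst (w (Suc y))"
      using oin[of x] oin[of y] oin[of "Suc x"] oin[of "Suc y"] that by (auto simp: mod_Suc)
    have "A (Suc x) = A (Suc y) \<longleftrightarrow> snd (w (Suc x)) = snd (w (Suc y)) \<and> snd (w x) = snd (w y)"
      unfolding AS using that by (auto simp: mod_Suc split: if_splits)
    also have "\<dots> \<longleftrightarrow> w (Suc x) = w (Suc y) \<and> w x = w y"
      using f1 by (auto simp: prod_eq_iff)
    also have "\<dots> \<longleftrightarrow> w x = w y" using wS by auto
    finally show ?thesis .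
  qed
  have cyc: "is_cycle_at A k (Suc u) \<longleftrightarrow> P u" for u
  proof -
    have "A (Suc u) = A (Suc u + 2 * k') \<longleftrightarrow> w u = w (u + 2 * k')" for k'
      using Aeq[of u "u + 2 * k'"] by simp
    then show ?thesis unfolding is_cycle_at_def P_def by simp
  qed
  have "converges_at A k t \<longleftrightarrow> P (t - 1) \<and> (\<forall>u<t - 1. \<not> P u)"
  proof -
    have tt: "t = Suc (t - 1)" using t by simp
    have "(\<forall>\<tau>. 1 \<le> \<tau> \<and> \<tau> < t \<longrightarrow> \<not> is_cycle_at A k \<tau>) \<longleftrightarrow> (\<forall>u<t - 1. \<not> P u)"
    proof
      assume L: "\<forall>\<tau>. 1 \<le> \<tau> \<and> \<tau> < t \<longrightarrow> \<not> is_cycle_at A k \<tau>"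
      show "\<forall>u<t - 1. \<not> P u"
      proof (intro allI impI)
        fix u assume "u < t - 1"
        then show "\<not> P u" using L[rule_format, of "Suc u"] cyc by auto
      qed
    next
      assume R: "\<forall>u<t - 1. \<not> P u"
      show "\<forall>\<tau>. 1 \<le> \<tau> \<and> \<tau> < t \<longrightarrow> \<not> is_cycle_at A k \<tau>"
      proof (intro allI impI)
        fix \<tau> assume "1 \<le> \<tau> \<and> \<tau> < t"
        then have u: "\<tau> = Suc (\<tau> - 1)" "\<tau> - 1 < t - 1" by arith+
        then show "\<not> is_cycle_at A k \<tau>" using R cyc[of "\<tau> - 1"] by metis
      qed
    qed
    moreover have "is_cycle_at A k t \<longleftrightarrow> P (t - 1)" using cyc[of "t - 1"] tt by simp
    ultimately show ?thesis unfolding converges_at_def using t by blast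
  qed
  also have "\<dots> \<longleftrightarrow> ((\<forall>i j. i < j \<and> j < (t - 1) + 2 * k \<longrightarrow> w i \<noteq> w j) \<and> w ((t - 1) + 2 * k) = w (t - 1))"
    unfolding P_def
  proof (rule char_cycle[where F = H])
    show "w (Suc i) = H (w i)" for i by (rule wS)
    show "w i = w j \<Longrightarrow> i mod 2 = j mod 2" for i j using oin[of i] oin[of j] by auto
  qed (rule k)
  also have "\<dots> \<longleftrightarrow> (H, snd a0) \<in> Gd m1 m2 k t"
  proof -
    have e1: "(t - 1) + 2 * k = t + 2 * k - 1" using t by arith
    have e2: "j < t + 2 * k - 1 \<longleftrightarrow> j \<le> t + 2 * k - 2" for j using t k by arith
    show ?thesis unfolding Gd_def Rn_def w_def e1 using H a0 e2 by auto
  qed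
  finally show ?thesis unfolding A_def .
qed

definition SM1 :: "(nat \<times> (nat \<times> nat) \<Rightarrow> real) \<Rightarrow> nat \<Rightarrow> nat \<Rightarrow> nat \<Rightarrow> bool" where
  "SM1 U m1 b x \<longleftrightarrow> x \<in> {1..m1} \<and> (\<forall>y\<in>{1..m1}. y \<noteq> x \<longrightarrow> U (1, (y, b)) < U (1, (x, b)))"
definition SM2 :: "(nat \<times> (nat \<times> nat) \<Rightarrow> real) \<Rightarrow> nat \<Rightarrow> nat \<Rightarrow> nat \<Rightarrow> bool" where
  "SM2 U m2 a x \<longleftrightarrow> x \<in> {1..m2} \<and> (\<forall>y\<in>{1..m2}. y \<noteq> x \<longrightarrow> U (2, (a, y)) < U (2, (a, x)))"

lemma br1_eq: "br U m1 m2 1 b = (THE x. SM1 U m1 b x)"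
  by (simp add: br_def SM1_def)
lemma br2_eq: "br U m1 m2 2 a = (THE x. SM2 U m2 a x)"
  by (simp add: br_def SM2_def)

lemma SM1_unique: "SM1 U m1 b x \<Longrightarrow> SM1 U m1 b x' \<Longrightarrow> x = x'"
  unfolding SM1_def by force
lemma SM2_unique: "SM2 U m2 a x \<Longrightarrow> SM2 U m2 a x' \<Longrightarrow> x = x'"
  unfolding SM2_def by force

lemma br1_SM: "SM1 U m1 b x \<Longrightarrow> br U m1 m2 1 b = x"
  unfolding br1_eq using SM1_unique by blast
lemma br2_SM: "SM2 U m2 a x \<Longrightarrow> br U m1 m2 2 a = x"
  unfolding br2_eq using SM2_unique by blast

definition Iset :: "nat \<Rightarrow> nat \<Rightarrow> (nat \<times> (nat \<times> nat)) set" where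
  "Iset m1 m2 = {1, 2} \<times> ({1..m1} \<times> {1..m2})"

definition P1 :: "real measure \<Rightarrow> nat \<Rightarrow> nat \<Rightarrow> (nat \<times> (nat \<times> nat) \<Rightarrow> real) measure" where
  "P1 D m1 m2 = PiM (Iset m1 m2) (\<lambda>_. D)"

definition EvH :: "real measure \<Rightarrow> nat \<Rightarrow> nat \<Rightarrow> (nat \<times> nat \<Rightarrow> nat \<times> nat) \<Rightarrow> (nat \<times> (nat \<times> nat) \<Rightarrow> real) set" where
  "EvH D m1 m2 H = {U \<in> space (P1 D m1 m2).
      (\<forall>b\<in>{1..m2}. SM1 U m1 b (snd (H (0, b)))) \<and> (\<forall>a\<in>{1..m1}. SM2 U m2 a (snd (H (1, a))))}"

lemma game_space_eq: "game_space D m1 m2 = P1 D m1 m2 \<Otimes>\<^sub>M uniform_count_measure ({1..m1} \<times> {1..m2})"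
  by (simp add: game_space_def P1_def Iset_def)

lemma comp_meas:
  assumes sD: "sets D = sets borel"
  shows "(\<lambda>U. U j) \<in> borel_measurable (P1 D m1 m2)"
proof (cases "j \<in> Iset m1 m2")
  case True
  have "(\<lambda>U. U j) \<in> P1 D m1 m2 \<rightarrow>\<^sub>M D" unfolding P1_def
    by (rule measurable_component_singleton[OF True])
  then show ?thesis using measurable_cong_sets[OF refl sD] by blast
next
  case False
  have "(\<lambda>U. U j) \<in> borel_measurable (P1 D m1 m2) \<longleftrightarrow> (\<lambda>U. undefined :: real) \<in> borel_measurable (P1 D m1 m2)"
    by (rule measurable_cong) (use False in \<open>auto simp: P1_def space_PiM dest: PiE_arb\<close>)
  then show ?thesis by simp
qed

lemma EvH_sets:
  assumes sD: "sets D = sets borel"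
  shows "EvH D m1 m2 H \<in> sets (P1 D m1 m2)"
proof -
  note [measurable] = comp_meas[OF sD]
  show ?thesis unfolding EvH_def SM1_def SM2_def by measurable
qed


definition tr :: "nat \<Rightarrow> nat \<Rightarrow> nat \<Rightarrow> nat" where
  "tr a b y = (if y = a then b else if y = b then a else y)"

lemma tr_tr[simp]: "tr a b (tr a b y) = y" by (auto simp: tr_def)
lemma tr_a[simp]: "tr a b a = b" by (auto simp: tr_def)
lemma tr_b[simp]: "tr a b b = a" by (auto simp: tr_def)
lemma tr_in: "y \<in> S \<Longrightarrow> a \<in> S \<Longrightarrow> b \<in> S \<Longrightarrow> tr a b y \<in> S" by (auto simp: tr_def)
lemma tr_eq_b: "tr a b y = b \<longleftrightarrow> y = a" by (auto simp: tr_def)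

lemma swap_all:
  assumes "h \<in> S" "h' \<in> S"
  shows "(\<forall>y\<in>S. y \<noteq> h' \<longrightarrow> f (tr h h' y) < c) \<longleftrightarrow> (\<forall>y\<in>S. y \<noteq> h \<longrightarrow> f y < c)"
proof
  assume L: "\<forall>y\<in>S. y \<noteq> h' \<longrightarrow> f (tr h h' y) < c"
  show "\<forall>y\<in>S. y \<noteq> h \<longrightarrow> f y < c"
  proof (intro ballI impI)
    fix y assume y: "y \<in> S" "y \<noteq> h"
    have "tr h h' y \<in> S" "tr h h' y \<noteq> h'" using y assms tr_in tr_eq_b by auto
    then show "f y < c" using L by (metis tr_tr)
  qed
next
  assume R: "\<forall>y\<in>S. y \<noteq> h \<longrightarrow> f y < c"
  show "\<forall>y\<in>S. y \<noteq> h' \<longrightarrow> f (tr h h' y) < c"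
  proof (intro ballI impI)
    fix y assume y: "y \<in> S" "y \<noteq> h'"
    have "tr h h' y \<in> S" "tr h h' y \<noteq> h" using y assms tr_in by (auto simp: tr_def)
    then show "f (tr h h' y) < c" using R by blast
  qed
qed

definition sig :: "(nat \<times> nat \<Rightarrow> nat \<times> nat) \<Rightarrow> (nat \<times> nat \<Rightarrow> nat \<times> nat) \<Rightarrow> nat \<times> (nat \<times> nat) \<Rightarrow> nat \<times> (nat \<times> nat)" where
  "sig H H' j = (case j of (i, (x, y)) \<Rightarrow>
     if i = 1 then (1, (tr (snd (H (0, y))) (snd (H' (0, y))) x, y))
     else (i, (x, tr (snd (H (1, x))) (snd (H' (1, x))) y)))"

lemma Hs_vals:
  assumes H: "H \<in> Hs m1 m2"
  shows "b \<in> {1..m2} \<Longrightarrow> snd (H (0, b)) \<in> {1..m1}" "a \<in> {1..m1} \<Longrightarrow> snd (H (1, a)) \<in> {1..m2}"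
proof -
  assume b: "b \<in> {1..m2}"
  have "(0, b) \<in> Xs m1 m2" using b by (simp add: Xs_def)
  then have "H (0, b) \<in> Tg m1 m2 (0, b)" using H by (auto simp: Hs_def PiE_iff)
  then show "snd (H (0, b)) \<in> {1..m1}" by (auto simp: Tg_def)
next
  assume a: "a \<in> {1..m1}"
  have "(1, a) \<in> Xs m1 m2" using a by (simp add: Xs_def)
  then have "H (1, a) \<in> Tg m1 m2 (1, a)" using H by (auto simp: Hs_def PiE_iff)
  then show "snd (H (1, a)) \<in> {1..m2}" by (auto simp: Tg_def)
qed

lemma EvH_sym:
  assumes D: "prob_space D" and sD: "sets D = sets borel"
    and H: "H \<in> Hs m1 m2" and H': "H' \<in> Hs m1 m2"
  shows "emeasure (P1 D m1 m2) (EvH D m1 m2 H) = emeasure (P1 D m1 m2) (EvH D m1 m2 H')"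
proof -
  let ?I = "Iset m1 m2"
  let ?\<sigma> = "sig H H'"
  define \<rho> where "\<rho> \<omega> = (\<lambda>n\<in>?I. \<omega> (?\<sigma> n))" for \<omega> :: "nat \<times> (nat \<times> nat) \<Rightarrow> real"
  have \<sigma>I: "?\<sigma> j \<in> ?I" if j: "j \<in> ?I" for j
  proof -
    obtain i x y where je: "j = (i, (x, y))" by (metis prod.collapse)
    have x: "x \<in> {1..m1}" and y: "y \<in> {1..m2}" and i: "i = 1 \<or> i = 2" using j je by (auto simp: Iset_def)
    have "tr (snd (H (0, y))) (snd (H' (0, y))) x \<in> {1..m1}"
      by (rule tr_in[OF x Hs_vals(1)[OF H y] Hs_vals(1)[OF H' y]])
    moreover have "tr (snd (H (1, x))) (snd (H' (1, x))) y \<in> {1..m2}"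
      by (rule tr_in[OF y Hs_vals(2)[OF H x] Hs_vals(2)[OF H' x]])
    ultimately show ?thesis using x y i je by (auto simp: sig_def Iset_def)
  qed
  have invo: "?\<sigma> (?\<sigma> j) = j" if "j \<in> ?I" for j
    using that by (auto simp: sig_def Iset_def)
  have inj: "inj_on ?\<sigma> ?I" by (metis inj_onI invo)
  have dist: "distr (P1 D m1 m2) (P1 D m1 m2) \<rho> = P1 D m1 m2"
    using distr_PiM_reindex[of ?I "\<lambda>_. D" ?\<sigma> ?I] D inj \<sigma>I unfolding P1_def \<rho>_def by auto
  have \<rho>m: "\<rho> \<in> P1 D m1 m2 \<rightarrow>\<^sub>M P1 D m1 m2"
    unfolding \<rho>_def P1_def by (intro measurable_restrict measurable_component_singleton \<sigma>I)
  have pre: "\<rho> -` EvH D m1 m2 H' \<inter> space (P1 D m1 m2) = EvH D m1 m2 H"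
  proof (intro set_eqI iffI)
    fix U assume U: "U \<in> \<rho> -` EvH D m1 m2 H' \<inter> space (P1 D m1 m2)"
    then have sp: "U \<in> space (P1 D m1 m2)" by auto
    have c1: "SM1 U m1 b (snd (H (0, b)))" if b: "b \<in> {1..m2}" for b
    proof -
      have "SM1 (\<rho> U) m1 b (snd (H' (0, b)))" using U b by (auto simp: EvH_def)
      moreover have "\<rho> U (1, (y, b)) = U (1, (tr (snd (H (0, b))) (snd (H' (0, b))) y, b))" if "y \<in> {1..m1}" for y
        using that b by (simp add: \<rho>_def sig_def Iset_def)
      ultimately have "\<forall>y\<in>{1..m1}. y \<noteq> snd (H' (0, b)) \<longrightarrow> U (1, (tr (snd (H (0, b))) (snd (H' (0, b))) y, b)) < U (1, (snd (H (0, b)), b))"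
        using Hs_vals(1)[OF H b] Hs_vals(1)[OF H' b] unfolding SM1_def by auto
      then show ?thesis using swap_all[OF Hs_vals(1)[OF H b] Hs_vals(1)[OF H' b], of "\<lambda>y. U (1, (y, b))"]
        Hs_vals(1)[OF H b] unfolding SM1_def by auto
    qed
    have c2: "SM2 U m2 a (snd (H (1, a)))" if a: "a \<in> {1..m1}" for a
    proof -
      have "SM2 (\<rho> U) m2 a (snd (H' (1, a)))" using U a by (auto simp: EvH_def)
      moreover have "\<rho> U (2, (a, y)) = U (2, (a, tr (snd (H (1, a))) (snd (H' (1, a))) y))" if "y \<in> {1..m2}" for y
        using that a by (simp add: \<rho>_def sig_def Iset_def)
      ultimately have "\<forall>y\<in>{1..m2}. y \<noteq> snd (H' (1, a)) \<longrightarrow> U (2, (a, tr (snd (H (1, a))) (snd (H' (1, a))) y)) < U (2, (a, snd (H (1, a))))"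
        using Hs_vals(2)[OF H a] Hs_vals(2)[OF H' a] unfolding SM2_def by auto
      then show ?thesis using swap_all[OF Hs_vals(2)[OF H a] Hs_vals(2)[OF H' a], of "\<lambda>y. U (2, (a, y))"]
        Hs_vals(2)[OF H a] unfolding SM2_def by auto
    qed
    show "U \<in> EvH D m1 m2 H" using sp c1 c2 by (auto simp: EvH_def)
  next
    fix U assume U: "U \<in> EvH D m1 m2 H"
    then have sp: "U \<in> space (P1 D m1 m2)" by (auto simp: EvH_def)
    have sp': "\<rho> U \<in> space (P1 D m1 m2)" using measurable_space[OF \<rho>m sp] .
    have c1: "SM1 (\<rho> U) m1 b (snd (H' (0, b)))" if b: "b \<in> {1..m2}" for b
    proof -
      have "SM1 U m1 b (snd (H (0, b)))" using U b by (auto simp: EvH_def)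
      moreover have "\<rho> U (1, (y, b)) = U (1, (tr (snd (H (0, b))) (snd (H' (0, b))) y, b))" if "y \<in> {1..m1}" for y
        using that b by (simp add: \<rho>_def sig_def Iset_def)
      ultimately show ?thesis using swap_all[OF Hs_vals(1)[OF H b] Hs_vals(1)[OF H' b], of "\<lambda>y. U (1, (y, b))"]
        Hs_vals(1)[OF H b] Hs_vals(1)[OF H' b] unfolding SM1_def by auto
    qed
    have c2: "SM2 (\<rho> U) m2 a (snd (H' (1, a)))" if a: "a \<in> {1..m1}" for a
    proof -
      have "SM2 U m2 a (snd (H (1, a)))" using U a by (auto simp: EvH_def)
      moreover have "\<rho> U (2, (a, y)) = U (2, (a, tr (snd (H (1, a))) (snd (H' (1, a))) y))" if "y \<in> {1..m2}" for y
        using that a by (simp add: \<rho>_def sig_def Iset_def)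
      ultimately show ?thesis using swap_all[OF Hs_vals(2)[OF H a] Hs_vals(2)[OF H' a], of "\<lambda>y. U (2, (a, y))"]
        Hs_vals(2)[OF H a] Hs_vals(2)[OF H' a] unfolding SM2_def by auto
    qed
    show "U \<in> \<rho> -` EvH D m1 m2 H' \<inter> space (P1 D m1 m2)" using sp sp' c1 c2 by (auto simp: EvH_def)
  qed
  have "emeasure (P1 D m1 m2) (EvH D m1 m2 H') = emeasure (distr (P1 D m1 m2) (P1 D m1 m2) \<rho>) (EvH D m1 m2 H')"
    using dist by simp
  also have "\<dots> = emeasure (P1 D m1 m2) (\<rho> -` EvH D m1 m2 H' \<inter> space (P1 D m1 m2))"
    by (rule emeasure_distr[OF \<rho>m EvH_sets[OF sD]])
  finally show ?thesis using pre by simp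
qed


lemma tie_null:
  assumes D: "prob_space D" and sD: "sets D = sets borel" and at: "\<forall>x. measure D {x} = 0"
    and j: "j \<in> Iset m1 m2" and j': "j' \<in> Iset m1 m2" and jj: "j \<noteq> j'"
  shows "emeasure (P1 D m1 m2) {U \<in> space (P1 D m1 m2). U j = U j'} = 0"
proof -
  interpret D: prob_space D by fact
  let ?I = "Iset m1 m2"
  define I' where "I' = ?I - {j}"
  define Q where "Q = PiM I' (\<lambda>_. D)"
  interpret Q: prob_space Q unfolding Q_def by (rule prob_space_PiM) (use D in auto)
  have II: "insert j I' = ?I" using j by (auto simp: I'_def)
  have j'I': "j' \<in> I'" using j' jj by (auto simp: I'_def)
  define f where "f = (\<lambda>p :: real \<times> (nat \<times> (nat \<times> nat) \<Rightarrow> real). (snd p)(j := fst p))"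
  have dist: "distr (D \<Otimes>\<^sub>M Q) (P1 D m1 m2) f = P1 D m1 m2"
    using distr_pair_PiM_eq_PiM[of I' "\<lambda>_. D" j] D unfolding P1_def Q_def f_def II
    by (simp add: case_prod_beta')
  have fm: "f \<in> D \<Otimes>\<^sub>M Q \<rightarrow>\<^sub>M P1 D m1 m2"
    unfolding f_def P1_def Q_def
    by (rule measurable_fun_upd[where J = I']) (use II in auto)
  note [measurable] = comp_meas[OF sD]
  have S: "{U \<in> space (P1 D m1 m2). U j = U j'} \<in> sets (P1 D m1 m2)" by measurable
  have spD: "space D = UNIV" using sets_eq_imp_space_eq[OF sD] by simp
  define A where "A = {p \<in> space (D \<Otimes>\<^sub>M Q). fst p = snd p j'}"
  have pre: "f -` {U \<in> space (P1 D m1 m2). U j = U j'} \<inter> space (D \<Otimes>\<^sub>M Q) = A"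
    using measurable_space[OF fm] jj unfolding A_def f_def by auto
  have fstm: "fst \<in> borel_measurable (D \<Otimes>\<^sub>M Q)"
    using measurable_cong_sets[OF refl sD] measurable_fst by blast
  have sndm: "(\<lambda>p. snd p j') \<in> borel_measurable (D \<Otimes>\<^sub>M Q)"
  proof -
    have "(\<lambda>X. X j') \<in> Q \<rightarrow>\<^sub>M D" unfolding Q_def by (rule measurable_component_singleton[OF j'I'])
    then have "(\<lambda>X. X j') \<in> borel_measurable Q" using measurable_cong_sets[OF refl sD] by blast
    then show ?thesis by (rule measurable_compose[OF measurable_snd])
  qed
  have Am: "A \<in> sets (D \<Otimes>\<^sub>M Q)" unfolding A_def by (rule measurable_equality_set[OF fstm sndm])
  have "emeasure (P1 D m1 m2) {U \<in> space (P1 D m1 m2). U j = U j'}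
      = emeasure (distr (D \<Otimes>\<^sub>M Q) (P1 D m1 m2) f) {U \<in> space (P1 D m1 m2). U j = U j'}"
    using dist by simp
  also have "\<dots> = emeasure (D \<Otimes>\<^sub>M Q) A"
    using emeasure_distr[OF fm S] pre by simp
  also have "\<dots> = (\<integral>\<^sup>+x. emeasure Q (Pair x -` A) \<partial>D)"
    by (rule Q.emeasure_pair_measure_alt[OF Am])
  also have "\<dots> = (\<integral>\<^sup>+x. 0 \<partial>D)"
  proof (rule nn_integral_cong)
    fix x assume "x \<in> space D"
    have "Pair x -` A = (\<lambda>X. X j') -` {x} \<inter> space Q"
      unfolding A_def by (auto simp: space_pair_measure spD)
    have jm: "(\<lambda>X. X j') \<in> Q \<rightarrow>\<^sub>M D" unfolding Q_def by (rule measurable_component_singleton[OF j'I'])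
    have "emeasure (distr Q D (\<lambda>X. X j')) {x} = emeasure Q ((\<lambda>X. X j') -` {x} \<inter> space Q)"
      by (rule emeasure_distr[OF jm]) (simp add: sD)
    with \<open>Pair x -` A = _\<close> have "emeasure Q (Pair x -` A) = emeasure (distr Q D (\<lambda>X. X j')) {x}"
      by simp
    also have "distr Q D (\<lambda>X. X j') = D"
      unfolding Q_def by (rule distr_PiM_component[OF _ j'I']) (use D in auto)
    also have "emeasure D {x} = 0" using at D.emeasure_eq_measure by simp
    finally show "emeasure Q (Pair x -` A) = 0" .
  qed
  finally show ?thesis by simp
qed


lemma ex_strict_max:
  fixes f :: "nat \<Rightarrow> real"
  assumes "finite S" "S \<noteq> {}" "inj_on f S"
  shows "\<exists>x\<in>S. \<forall>y\<in>S. y \<noteq> x \<longrightarrow> f y < f x"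
proof -
  have "Max (f ` S) \<in> f ` S" using assms by (intro Max_in) auto
  then obtain x where x: "x \<in> S" "f x = Max (f ` S)" by (metis imageE)
  have "f y < f x" if "y \<in> S" "y \<noteq> x" for y
  proof -
    have "f y \<le> f x" using x that assms by simp
    moreover have "f y \<noteq> f x" using assms(3) that x(1) by (meson inj_onD)
    ultimately show ?thesis by simp
  qed
  then show ?thesis using x by blast
qed

lemma G_cover:
  assumes U: "U \<in> space (P1 D m1 m2)" and dis: "\<forall>j\<in>Iset m1 m2. \<forall>j'\<in>Iset m1 m2. j \<noteq> j' \<longrightarrow> U j \<noteq> U j'"
    and m1: "m1 \<ge> 1" and m2: "m2 \<ge> 1"
  shows "\<exists>H\<in>Hs m1 m2. U \<in> EvH D m1 m2 H"
proof -
  have s1: "SM1 U m1 b (br U m1 m2 1 b)" if b: "b \<in> {1..m2}" for b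
  proof -
    have "inj_on (\<lambda>y. U (1, (y, b))) {1..m1}"
    proof (rule inj_onI, rule ccontr)
      fix x y assume xy: "x \<in> {1..m1}" "y \<in> {1..m1}" "U (1, (x, b)) = U (1, (y, b))" "x \<noteq> y"
      have "(1, (x, b)) \<in> Iset m1 m2" "(1, (y, b)) \<in> Iset m1 m2" using xy b by (auto simp: Iset_def)
      then show False using dis xy by fastforce
    qed
    then obtain x where "x \<in> {1..m1}" "\<forall>y\<in>{1..m1}. y \<noteq> x \<longrightarrow> U (1, (y, b)) < U (1, (x, b))"
      using ex_strict_max[of "{1..m1}" "\<lambda>y. U (1, (y, b))"] m1 by auto
    then have "SM1 U m1 b x" by (simp add: SM1_def)
    then show ?thesis using br1_SM by metis
  qed
  have s2: "SM2 U m2 a (br U m1 m2 2 a)" if a: "a \<in> {1..m1}" for a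
  proof -
    have "inj_on (\<lambda>y. U (2, (a, y))) {1..m2}"
    proof (rule inj_onI, rule ccontr)
      fix x y assume xy: "x \<in> {1..m2}" "y \<in> {1..m2}" "U (2, (a, x)) = U (2, (a, y))" "x \<noteq> y"
      have "(2, (a, x)) \<in> Iset m1 m2" "(2, (a, y)) \<in> Iset m1 m2" using xy a by (auto simp: Iset_def)
      then show False using dis xy by fastforce
    qed
    then obtain x where "x \<in> {1..m2}" "\<forall>y\<in>{1..m2}. y \<noteq> x \<longrightarrow> U (2, (a, y)) < U (2, (a, x))"
      using ex_strict_max[of "{1..m2}" "\<lambda>y. U (2, (a, y))"] m2 by auto
    then have "SM2 U m2 a x" by (simp add: SM2_def)
    then show ?thesis using br2_SM by metis
  qed
  define H where "H = (\<lambda>p\<in>Xs m1 m2. if fst p = 0 then (1::nat, br U m1 m2 1 (snd p)) else (0, br U m1 m2 2 (snd p)))"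
  have "H \<in> Hs m1 m2"
    unfolding Hs_def H_def
  proof (rule PiE_I)
    fix p assume p: "p \<in> Xs m1 m2"
    then consider (a) b where "p = (0, b)" "b \<in> {1..m2}" | (b) a where "p = (1, a)" "a \<in> {1..m1}"
      by (auto simp: Xs_def)
    then show "(\<lambda>p\<in>Xs m1 m2. if fst p = 0 then (1, br U m1 m2 1 (snd p)) else (0, br U m1 m2 2 (snd p))) p \<in> Tg m1 m2 p"
    proof cases
      case a then show ?thesis using s1[of b] p by (simp add: Tg_def SM1_def)
    next
      case b then show ?thesis using s2[of a] p by (simp add: Tg_def SM2_def)
    qed
  qed simp
  moreover have "U \<in> EvH D m1 m2 H"
    unfolding EvH_def H_def using U s1 s2 by (auto simp: Xs_def)
  ultimately show ?thesis by blast
qed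

lemma EvH_disj:
  assumes H: "H \<in> Hs m1 m2" and H': "H' \<in> Hs m1 m2" and ne: "H \<noteq> H'"
  shows "EvH D m1 m2 H \<inter> EvH D m1 m2 H' = {}"
proof -
  obtain p where p: "p \<in> Xs m1 m2" "H p \<noteq> H' p"
    using PiE_ext[of H "Xs m1 m2" "Tg m1 m2" H'] H H' ne unfolding Hs_def by blast
  have Hp: "H p \<in> Tg m1 m2 p" "H' p \<in> Tg m1 m2 p" using H H' p(1) by (auto simp: Hs_def PiE_iff)
  show ?thesis
  proof (rule ccontr)
    assume "EvH D m1 m2 H \<inter> EvH D m1 m2 H' \<noteq> {}"
    then obtain U where U: "U \<in> EvH D m1 m2 H" "U \<in> EvH D m1 m2 H'" by blast
    consider (a) b where "p = (0, b)" "b \<in> {1..m2}" | (b) a where "p = (1, a)" "a \<in> {1..m1}"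
      using p(1) by (auto simp: Xs_def)
    then show False
    proof cases
      case a
      have "snd (H p) = snd (H' p)" using U a SM1_unique unfolding EvH_def by fastforce
      moreover have "fst (H p) = fst (H' p)" using Hp a by (auto simp: Tg_def)
      ultimately show False using p(2) by (simp add: prod_eq_iff)
    next
      case b
      have "snd (H p) = snd (H' p)" using U b SM2_unique unfolding EvH_def by fastforce
      moreover have "fst (H p) = fst (H' p)" using Hp b by (auto simp: Tg_def)
      ultimately show False using p(2) by (simp add: prod_eq_iff)
    qed
  qed
qed


lemma finite_Iset[simp]: "finite (Iset m1 m2)" by (simp add: Iset_def)

lemma AE_cover:
  assumes D: "prob_space D" and sD: "sets D = sets borel" and at: "\<forall>x. measure D {x} = 0"
    and m1: "m1 \<ge> 1" and m2: "m2 \<ge> 1"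
  shows "AE U in P1 D m1 m2. U \<in> (\<Union>H\<in>Hs m1 m2. EvH D m1 m2 H)"
proof -
  have "AE U in P1 D m1 m2. \<forall>j\<in>Iset m1 m2. \<forall>j'\<in>Iset m1 m2. j \<noteq> j' \<longrightarrow> U j \<noteq> U j'"
  proof (intro AE_finite_allI finite_Iset)
    fix j j' assume j: "j \<in> Iset m1 m2" and j': "j' \<in> Iset m1 m2"
    show "AE U in P1 D m1 m2. j \<noteq> j' \<longrightarrow> U j \<noteq> U j'"
    proof (cases "j = j'")
      case False
      note [measurable] = comp_meas[OF sD]
      have S: "{U \<in> space (P1 D m1 m2). U j = U j'} \<in> null_sets (P1 D m1 m2)"
        using tie_null[OF D sD at j j' False] by (auto simp: null_sets_def)
      show ?thesis by (rule AE_I'[OF S]) auto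
    qed simp
  qed
  then show ?thesis
  proof (rule AE_mp[OF _ AE_I2])
    fix U assume "U \<in> space (P1 D m1 m2)"
    then show "(\<forall>j\<in>Iset m1 m2. \<forall>j'\<in>Iset m1 m2. j \<noteq> j' \<longrightarrow> U j \<noteq> U j') \<longrightarrow> U \<in> (\<Union>H\<in>Hs m1 m2. EvH D m1 m2 H)"
      using G_cover[of U D m1 m2] m1 m2 by blast
  qed
qed

lemma measure_EvH:
  assumes D: "prob_space D" and sD: "sets D = sets borel" and at: "\<forall>x. measure D {x} = 0"
    and m1: "m1 \<ge> 1" and m2: "m2 \<ge> 1" and H: "H \<in> Hs m1 m2"
  shows "measure (P1 D m1 m2) (EvH D m1 m2 H) = 1 / card (Hs m1 m2)"
proof -
  interpret P: prob_space "P1 D m1 m2" unfolding P1_def by (rule prob_space_PiM) (use D in auto)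
  define G where "G = (\<Union>H\<in>Hs m1 m2. EvH D m1 m2 H)"
  have Gs: "G \<in> sets (P1 D m1 m2)" unfolding G_def using EvH_sets[OF sD] by auto
  have "P.prob G = 1" using P.prob_eq_1[OF Gs] AE_cover[OF D sD at m1 m2] unfolding G_def by simp
  moreover have "P.prob G = (\<Sum>H'\<in>Hs m1 m2. P.prob (EvH D m1 m2 H'))"
    unfolding G_def
  proof (rule P.finite_measure_finite_Union)
    show "disjoint_family_on (EvH D m1 m2) (Hs m1 m2)"
      unfolding disjoint_family_on_def using EvH_disj by blast
  qed (use EvH_sets[OF sD] in auto)
  moreover have "P.prob (EvH D m1 m2 H') = P.prob (EvH D m1 m2 H)" if "H' \<in> Hs m1 m2" for H'
    using EvH_sym[OF D sD that H] by (simp add: measure_def)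
  ultimately have "1 = real (card (Hs m1 m2)) * P.prob (EvH D m1 m2 H)" by simp
  moreover have "card (Hs m1 m2) > 0" using H card_gt_0_iff by fastforce
  ultimately show ?thesis by (metis nonzero_mult_div_cancel_left of_nat_0_less_iff less_irrefl)
qed

lemma pred_eq_countable:
  fixes f g :: "'a \<Rightarrow> 'b::countable"
  assumes f: "f \<in> M \<rightarrow>\<^sub>M count_space UNIV" and g: "g \<in> M \<rightarrow>\<^sub>M count_space UNIV"
  shows "Measurable.pred M (\<lambda>x. f x = g x)"
proof -
  have "Measurable.pred M (\<lambda>x. \<exists>c. f x = c \<and> g x = c)"
    using f g by measurable
  moreover have "(\<lambda>x. \<exists>c. f x = c \<and> g x = c) = (\<lambda>x. f x = g x)" by auto
  ultimately show ?thesis by (simp only:)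
qed

lemma THE_SM1: "(THE x. SM1 U m1 b x) = v \<longleftrightarrow> SM1 U m1 b v \<or> ((\<forall>x. \<not> SM1 U m1 b x) \<and> The (\<lambda>_::nat. False) = v)"
proof (cases "\<exists>x. SM1 U m1 b x")
  case True
  then obtain x where x: "SM1 U m1 b x" by blast
  then have "(THE x. SM1 U m1 b x) = x" using SM1_unique by blast
  then show ?thesis using x SM1_unique by blast
next
  case False
  then have "(\<lambda>x. SM1 U m1 b x) = (\<lambda>_. False)" by auto
  then show ?thesis using False by simp
qed

lemma THE_SM2: "(THE x. SM2 U m2 b x) = v \<longleftrightarrow> SM2 U m2 b v \<or> ((\<forall>x. \<not> SM2 U m2 b x) \<and> The (\<lambda>_::nat. False) = v)"
proof (cases "\<exists>x. SM2 U m2 b x")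
  case True
  then obtain x where x: "SM2 U m2 b x" by blast
  then have "(THE x. SM2 U m2 b x) = x" using SM2_unique by blast
  then show ?thesis using x SM2_unique by blast
next
  case False
  then have "(\<lambda>x. SM2 U m2 b x) = (\<lambda>_. False)" by auto
  then show ?thesis using False by simp
qed

context
  fixes D :: "real measure" and m1 m2 :: nat
  assumes sD: "sets D = sets borel"
begin

abbreviation "\<Omega> \<equiv> P1 D m1 m2 \<Otimes>\<^sub>M uniform_count_measure ({1..m1} \<times> {1..m2})"

lemma compO[measurable]: "(\<lambda>\<omega>. fst \<omega> j) \<in> borel_measurable \<Omega>"
  by (rule measurable_compose[OF measurable_fst comp_meas[OF sD]])

lemma brO: "(\<lambda>\<omega>. br (fst \<omega>) m1 m2 i b) \<in> \<Omega> \<rightarrow>\<^sub>M count_space UNIV"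
proof -
  have "{\<omega> \<in> space \<Omega>. br (fst \<omega>) m1 m2 i b = v} \<in> sets \<Omega>" for v
  proof (cases "i = 1")
    case True
    have "{\<omega> \<in> space \<Omega>. br (fst \<omega>) m1 m2 i b = v} =
          {\<omega> \<in> space \<Omega>. SM1 (fst \<omega>) m1 b v \<or> ((\<forall>x. \<not> SM1 (fst \<omega>) m1 b x) \<and> The (\<lambda>_::nat. False) = v)}"
      unfolding True br1_eq THE_SM1 by (rule refl)
    also have "\<dots> \<in> sets \<Omega>" unfolding SM1_def by measurable
    finally show ?thesis .
  next
    case False
    have "{\<omega> \<in> space \<Omega>. br (fst \<omega>) m1 m2 i b = v} =
          {\<omega> \<in> space \<Omega>. SM2 (fst \<omega>) m2 b v \<or> ((\<forall>x. \<not> SM2 (fst \<omega>) m2 b x) \<and> The (\<lambda>_::nat. False) = v)}"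
    proof -
      have "br U m1 m2 i b = (THE x. SM2 U m2 b x)" for U using False by (simp add: br_def SM2_def)
      then show ?thesis by (simp add: THE_SM2)
    qed
    also have "\<dots> \<in> sets \<Omega>" unfolding SM2_def by measurable
    finally show ?thesis .
  qed
  then show ?thesis
    by (subst measurable_count_space_eq2_countable) (auto simp: Int_def conj_commute Collect_conj_eq[symmetric] vimage_def)
qed

lemma sndO: "snd \<in> \<Omega> \<rightarrow>\<^sub>M count_space UNIV"
proof -
  have "(\<lambda>x. x) \<in> uniform_count_measure ({1..m1} \<times> {1..m2}) \<rightarrow>\<^sub>M (count_space UNIV :: (nat \<times> nat) measure)"
    using measurable_cong_sets[OF sets_uniform_count_measure_count_space refl] by auto
  then show ?thesis by (rule measurable_compose[OF measurable_snd])
qed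

lemma cwO[measurable]: "(\<lambda>\<omega>. cw_dyn (fst \<omega>) m1 m2 (snd \<omega>) n) \<in> \<Omega> \<rightarrow>\<^sub>M count_space UNIV"
proof (induction n)
  case 0
  then show ?case using sndO by simp
next
  case (Suc n)
  define f where "f a \<omega> = (if sc (Suc n) = 1 then (br (fst \<omega>) m1 m2 1 (snd a), snd a) else (fst a, br (fst \<omega>) m1 m2 2 (fst a)))"
    for a :: "nat \<times> nat" and \<omega> :: "(nat \<times> (nat \<times> nat) \<Rightarrow> real) \<times> (nat \<times> nat)"
  have fm: "f a \<in> \<Omega> \<rightarrow>\<^sub>M count_space UNIV" for a
  proof (cases "sc (Suc n) = 1")
    case True
    have "(\<lambda>x. (x, snd a)) \<in> (count_space UNIV :: nat measure) \<rightarrow>\<^sub>M (count_space UNIV :: (nat \<times> nat) measure)" by simp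
    from measurable_compose[OF brO this] show ?thesis using True unfolding f_def by simp
  next
    case False
    have "(\<lambda>x. (fst a, x)) \<in> (count_space UNIV :: nat measure) \<rightarrow>\<^sub>M (count_space UNIV :: (nat \<times> nat) measure)" by simp
    from measurable_compose[OF brO this] show ?thesis using False unfolding f_def by simp
  qed
  have "(\<lambda>\<omega>. f (cw_dyn (fst \<omega>) m1 m2 (snd \<omega>) n) \<omega>) \<in> \<Omega> \<rightarrow>\<^sub>M count_space UNIV"
    by (rule measurable_compose_countable[OF fm Suc])
  moreover have "(\<lambda>\<omega>. cw_dyn (fst \<omega>) m1 m2 (snd \<omega>) (Suc n)) = (\<lambda>\<omega>. f (cw_dyn (fst \<omega>) m1 m2 (snd \<omega>) n) \<omega>)"
    by (simp add: f_def Let_def fun_eq_iff)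
  ultimately show ?case by simp
qed

lemma event_sets: "{\<omega> \<in> space \<Omega>. converges_at (cw_dyn (fst \<omega>) m1 m2 (snd \<omega>)) k t} \<in> sets \<Omega>"
proof -
  have e: "Measurable.pred \<Omega> (\<lambda>\<omega>. cw_dyn (fst \<omega>) m1 m2 (snd \<omega>) a = cw_dyn (fst \<omega>) m1 m2 (snd \<omega>) b)" for a b
    by (rule pred_eq_countable[OF cwO cwO])
  have "Measurable.pred \<Omega> (\<lambda>\<omega>. converges_at (cw_dyn (fst \<omega>) m1 m2 (snd \<omega>)) k t)"
    unfolding converges_at_def is_cycle_at_def using e by measurable
  then show ?thesis by (simp add: pred_def)
qed

end

lemma conv_EvH:
  assumes U: "U \<in> EvH D m1 m2 H" and H: "H \<in> Hs m1 m2" and a0: "snd a0 \<in> {1..m2}"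
    and k: "k \<ge> 1" and t: "t \<ge> 1"
  shows "converges_at (cw_dyn U m1 m2 a0) k t \<longleftrightarrow> (H, snd a0) \<in> Gd m1 m2 k t"
proof (rule conv_iff[OF H a0 _ _ k t])
  fix b assume "b \<in> {1..m2}"
  then show "br U m1 m2 1 b = snd (H (0, b))" using U by (intro br1_SM) (auto simp: EvH_def)
next
  fix a assume "a \<in> {1..m1}"
  then show "br U m1 m2 2 a = snd (H (1, a))" using U by (intro br2_SM) (auto simp: EvH_def)
qed

lemma card_Hs_pos: "m1 \<ge> 1 \<Longrightarrow> m2 \<ge> 1 \<Longrightarrow> card (Hs m1 m2) > 0"
proof -
  assume "m1 \<ge> 1" "m2 \<ge> 1"
  then have "\<forall>p\<in>Xs m1 m2. Tg m1 m2 p \<noteq> {}" by (auto simp: Tg_def)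
  then have "Hs m1 m2 \<noteq> {}" unfolding Hs_def by (simp add: PiE_eq_empty_iff)
  then show ?thesis by (simp add: card_gt_0_iff)
qed

lemma measure_times_P:
  assumes P2: "prob_space M2" and A: "A \<in> sets M1" and B: "B \<in> sets M2" and P1: "prob_space M1"
  shows "measure (M1 \<Otimes>\<^sub>M M2) (A \<times> B) = measure M1 A * measure M2 B"
proof -
  interpret M2: prob_space M2 by fact
  have "emeasure (M1 \<Otimes>\<^sub>M M2) (A \<times> B) = emeasure M1 A * emeasure M2 B"
    by (rule M2.emeasure_pair_measure_Times[OF A B])
  then show ?thesis by (simp add: measure_def enn2real_mult)
qed


theorem theorem3:
  fixes D :: "real measure" and m1 m2 k t :: nat
  assumes "prob_space D" and "sets D = sets borel" and "\<forall>x. measure D {x} = 0"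
    and "m1 \<ge> 2" and "m2 \<ge> 2"
    and "k \<in> {1..min m1 m2}" and "t \<in> {1..2 * (min m1 m2 - k + 1)}"
  shows "measure (game_space D m1 m2)
           {\<omega> \<in> space (game_space D m1 m2). converges_at (cw_dyn (fst \<omega>) m1 m2 (snd \<omega>)) k t}
         = 1 / real (m_of m1 m2 (sc (t + 2 * k - 1)))
           * (\<Prod>i = 1..t + 2 * k - 2. (1 - 1 / real (m_of m1 m2 (sc i)) * real (i div 2)))"
proof -
  note D = assms(1) and sD = assms(2) and at = assms(3)
  have m1: "m1 \<ge> 1" and m2: "m2 \<ge> 1" using assms(4,5) by auto
  have k: "k \<ge> 1" and t: "t \<ge> 1" using assms(6,7) by auto
  define M where "M = {1..m1} \<times> {1..m2}"
  define P2 where "P2 = uniform_count_measure M"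
  have finM: "finite M" by (simp add: M_def)
  have cardM: "card M = m1 * m2" by (simp add: M_def card_cartesian_product)
  interpret Q1: prob_space "P1 D m1 m2" unfolding P1_def by (rule prob_space_PiM) (use D in auto)
  interpret Q2: prob_space P2 unfolding P2_def by (rule prob_space_uniform_count_measure) (use m1 m2 in \<open>auto simp: M_def\<close>)
  interpret PP: pair_prob_space "P1 D m1 m2" P2 by unfold_locales
  have GS: "game_space D m1 m2 = P1 D m1 m2 \<Otimes>\<^sub>M P2"
    by (simp add: game_space_eq P2_def M_def)
  define E where "E = {\<omega> \<in> space (P1 D m1 m2 \<Otimes>\<^sub>M P2). converges_at (cw_dyn (fst \<omega>) m1 m2 (snd \<omega>)) k t}"
  have Es: "E \<in> sets (P1 D m1 m2 \<Otimes>\<^sub>M P2)"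
    using event_sets[OF sD, of m1 m2 k t] unfolding E_def P2_def M_def by simp
  define G where "G = (\<Union>H\<in>Hs m1 m2. EvH D m1 m2 H)"
  have Gs: "G \<in> sets (P1 D m1 m2)" unfolding G_def using EvH_sets[OF sD] by auto
  have G0: "emeasure (P1 D m1 m2) (space (P1 D m1 m2) - G) = 0"
  proof -
    have "AE U in P1 D m1 m2. U \<in> G" using AE_cover[OF D sD at m1 m2] unfolding G_def .
    moreover have "{U \<in> space (P1 D m1 m2). \<not> U \<in> G} = space (P1 D m1 m2) - G" by auto
    ultimately show ?thesis using AE_iff_measurable[of "space (P1 D m1 m2) - G" "P1 D m1 m2" "\<lambda>U. U \<in> G"] Gs by auto
  qed
  define B where "B = (space (P1 D m1 m2) - G) \<times> M"
  have Bnull: "B \<in> null_sets (P1 D m1 m2 \<Otimes>\<^sub>M P2)"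
  proof -
    have Ms: "M \<in> sets P2" by (simp add: P2_def sets_uniform_count_measure)
    have "B \<in> sets (P1 D m1 m2 \<Otimes>\<^sub>M P2)" unfolding B_def using Gs Ms by auto
    moreover have "emeasure (P1 D m1 m2 \<Otimes>\<^sub>M P2) B = 0"
      unfolding B_def using Q2.emeasure_pair_measure_Times[of "space (P1 D m1 m2) - G" "P1 D m1 m2" M] Gs Ms G0 by simp
    ultimately show ?thesis by auto
  qed
  define A where "A H = {a0 \<in> M. (H, snd a0) \<in> Gd m1 m2 k t}" for H
  have spO: "space (P1 D m1 m2 \<Otimes>\<^sub>M P2) = space (P1 D m1 m2) \<times> M"
    by (simp add: space_pair_measure P2_def space_uniform_count_measure)
  have EB: "E - B = (\<Union>H\<in>Hs m1 m2. EvH D m1 m2 H \<times> A H)"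
  proof (intro set_eqI iffI)
    fix \<omega> assume \<omega>: "\<omega> \<in> E - B"
    obtain U a0 where \<omega>e: "\<omega> = (U, a0)" by (cases \<omega>)
    have U: "U \<in> space (P1 D m1 m2)" and a0: "a0 \<in> M" using \<omega> \<omega>e spO unfolding E_def by auto
    have "U \<in> G" using \<omega> \<omega>e U a0 unfolding B_def by auto
    then obtain H where H: "H \<in> Hs m1 m2" "U \<in> EvH D m1 m2 H" unfolding G_def by auto
    have sa: "snd a0 \<in> {1..m2}" using a0 by (auto simp: M_def)
    have "(H, snd a0) \<in> Gd m1 m2 k t"
      using conv_EvH[OF H(2) H(1) sa k t] \<omega> \<omega>e unfolding E_def by auto
    then show "\<omega> \<in> (\<Union>H\<in>Hs m1 m2. EvH D m1 m2 H \<times> A H)" using H a0 \<omega>e unfolding A_def by auto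
  next
    fix \<omega> assume "\<omega> \<in> (\<Union>H\<in>Hs m1 m2. EvH D m1 m2 H \<times> A H)"
    then obtain H U a0 where H: "H \<in> Hs m1 m2" "U \<in> EvH D m1 m2 H" and a0: "a0 \<in> A H" and \<omega>e: "\<omega> = (U, a0)"
      by auto
    have U: "U \<in> space (P1 D m1 m2)" using H by (auto simp: EvH_def)
    have a0M: "a0 \<in> M" using a0 by (auto simp: A_def)
    have sa: "snd a0 \<in> {1..m2}" using a0M by (auto simp: M_def)
    have "converges_at (cw_dyn U m1 m2 a0) k t"
      using conv_EvH[OF H(2) H(1) sa k t] a0 by (auto simp: A_def)
    moreover have "U \<in> G" using H unfolding G_def by auto
    ultimately show "\<omega> \<in> E - B" using U a0M \<omega>e spO unfolding E_def B_def by auto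
  qed
  have "measure (P1 D m1 m2 \<Otimes>\<^sub>M P2) E = measure (P1 D m1 m2 \<Otimes>\<^sub>M P2) (E - B)"
    using measure_Diff_null_set[OF Es Bnull] by simp
  also have "\<dots> = (\<Sum>H\<in>Hs m1 m2. measure (P1 D m1 m2 \<Otimes>\<^sub>M P2) (EvH D m1 m2 H \<times> A H))"
    unfolding EB
  proof (rule PP.finite_measure_finite_Union)
    show "(\<lambda>H. EvH D m1 m2 H \<times> A H) ` Hs m1 m2 \<subseteq> sets (P1 D m1 m2 \<Otimes>\<^sub>M P2)"
      using EvH_sets[OF sD] by (auto simp: P2_def sets_uniform_count_measure A_def)
    show "disjoint_family_on (\<lambda>H. EvH D m1 m2 H \<times> A H) (Hs m1 m2)"
      unfolding disjoint_family_on_def using EvH_disj by blast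
  qed simp
  also have "\<dots> = (\<Sum>H\<in>Hs m1 m2. (1 / card (Hs m1 m2)) * (real (card (A H)) / real (card M)))"
  proof (rule sum.cong[OF refl])
    fix H assume H: "H \<in> Hs m1 m2"
    have "measure (P1 D m1 m2 \<Otimes>\<^sub>M P2) (EvH D m1 m2 H \<times> A H) = measure (P1 D m1 m2) (EvH D m1 m2 H) * measure P2 (A H)"
    proof (rule measure_times_P[OF Q2.prob_space_axioms _ _ Q1.prob_space_axioms])
      show "EvH D m1 m2 H \<in> sets (P1 D m1 m2)" by (rule EvH_sets[OF sD])
      show "A H \<in> sets P2" by (auto simp: P2_def sets_uniform_count_measure A_def)
    qed
    also have "\<dots> = (1 / card (Hs m1 m2)) * (real (card (A H)) / real (card M))"
      using measure_EvH[OF D sD at m1 m2 H] measure_uniform_count_measure[OF finM, of "A H"]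
      by (simp add: P2_def A_def)
    finally show "measure (P1 D m1 m2 \<Otimes>\<^sub>M P2) (EvH D m1 m2 H \<times> A H) = (1 / card (Hs m1 m2)) * (real (card (A H)) / real (card M))" .
  qed
  also have "\<dots> = (1 / card (Hs m1 m2)) / real (card M) * (\<Sum>H\<in>Hs m1 m2. real (card (A H)))"
    by (simp add: sum_distrib_left)
  also have "(\<Sum>H\<in>Hs m1 m2. real (card (A H))) = real m1 * real (card (Gd m1 m2 k t))"
  proof -
    define C where "C H = {b \<in> {1..m2}. (H, b) \<in> Gd m1 m2 k t}" for H
    have AC: "A H = {1..m1} \<times> C H" for H unfolding A_def C_def M_def by auto
    have GdS: "Gd m1 m2 k t = Sigma (Hs m1 m2) C"
      unfolding C_def Gd_def Rn_def by auto
    have "card (Gd m1 m2 k t) = (\<Sum>H\<in>Hs m1 m2. card (C H))"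
      unfolding GdS by (rule card_SigmaI) (auto simp: C_def)
    then have "real (card (Gd m1 m2 k t)) = (\<Sum>H\<in>Hs m1 m2. real (card (C H)))" by simp
    moreover have "real (card (A H)) = real m1 * real (card (C H))" for H
      unfolding AC by (simp add: card_cartesian_product)
    ultimately show ?thesis by (simp add: sum_distrib_left)
  qed
  also have "real (card (Gd m1 m2 k t)) = real (card (Hs m1 m2)) * real m2 *
           (\<Prod>i = 1..t + 2 * k - 2. (1 - 1 / real (m_of m1 m2 (sc i)) * real (i div 2)))
           / real (m_of m1 m2 (sc (t + 2 * k - 1)))"
  proof -
    have mpos: "m_of m1 m2 (sc (t + 2 * k - 1)) > 0" using m1 m2 by (simp add: m_of_def)
    have "real (m_of m1 m2 (sc (t + 2 * k - 1))) * real (card (Gd m1 m2 k t)) = real (card (Rn m1 m2 (t + 2 * k - 2)))"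
      using arg_cong[OF card_Gd[OF k t, of m1 m2], of real] by simp
    then show ?thesis using card_Rn[of m1 m2 "t + 2 * k - 2"] m1 m2 mpos
      by (simp add: field_simps)
  qed
  finally have main: "measure (P1 D m1 m2 \<Otimes>\<^sub>M P2) E = 1 / real (card (Hs m1 m2)) / real (card M) *
      (real m1 * (real (card (Hs m1 m2)) * real m2 * (\<Prod>i = 1..t + 2 * k - 2. (1 - 1 / real (m_of m1 m2 (sc i)) * real (i div 2)))
        / real (m_of m1 m2 (sc (t + 2 * k - 1)))))" .
  have hpos: "card (Hs m1 m2) > 0" by (rule card_Hs_pos[OF m1 m2])
  have "measure (game_space D m1 m2)
           {\<omega> \<in> space (game_space D m1 m2). converges_at (cw_dyn (fst \<omega>) m1 m2 (snd \<omega>)) k t}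
        = measure (P1 D m1 m2 \<Otimes>\<^sub>M P2) E" unfolding GS E_def ..
  also have "\<dots> = 1 / real (m_of m1 m2 (sc (t + 2 * k - 1)))
           * (\<Prod>i = 1..t + 2 * k - 2. (1 - 1 / real (m_of m1 m2 (sc i)) * real (i div 2)))"
  proof -
    have alg: "1 / h / (a * b) * (a * (h * b * Pr / mo)) = 1 / mo * Pr" if "h > 0" "a > 0" "b > 0" for h a b Pr mo :: real
      using that by (simp add: field_simps)
    show ?thesis unfolding main cardM of_nat_mult
      by (rule alg) (use hpos m1 m2 in auto)
  qed
  finally show ?thesis .
qed


end
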